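(* Let $M$ be a compact manifold, $\phi\in\mathrm{Diff}^2(M)$ with finitely many periodic points, $M_P$ the set of all periodic points of $\phi$, and $\ell$ the lowest common multiple of their periods. Let $A\in\mathbb{M}_{N\times N}(\mathbb{R})$ with $\rho(A)<1$, $C\in\mathbb{R}^N$, $\omega\in C^2(M,\mathbb{R})$, and $f(m)=\sum_{k=0}^\infty A^kC\,\omega(\phi^{-k}(m))$. Then $f|_{M_P}$ is injective if and only if $g:M_P\to\mathbb{R}^N$, $g=\sum_{k=0}^{\ell-1}A^kC\,(\omega\circ\phi^{-k})$, is injective. *)

theory Defs
  imports "HOL-Analysis.Analysis"
begin

definition C2_on :: "'a::euclidean_space set \<Rightarrow> ('a \<Rightarrow> 'b::euclidean_space) \<Rightarrow> bool" where
  "C2_on U h \<longleftrightarrow> (\<exists>(h' :: 'a \<Rightarrow> ('a \<Rightarrow>\<^sub>L 'b)) (h'' :: 'a \<Rightarrow> ('a \<Rightarrow>\<^sub>L ('a \<Rightarrow>\<^sub>L 'b))).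
      (\<forall>x\<in>U. (h has_derivative blinfun_apply (h' x)) (at x)) \<and>
      (\<forall>x\<in>U. (h' has_derivative blinfun_apply (h'' x)) (at x)) \<and>
      continuous_on U h'')"

definition C2_submanifold :: "'a::euclidean_space set \<Rightarrow> bool" where
  "C2_submanifold M \<longleftrightarrow> (\<exists>k. \<forall>p\<in>M. \<exists>U V (h :: 'a \<Rightarrow> 'a) (B :: 'a set).
      open U \<and> p \<in> U \<and> open V \<and> B \<subseteq> Basis \<and> card B = k \<and>
      bij_betw h U V \<and> C2_on U h \<and> C2_on V (inv_into U h) \<and>
      h ` (U \<inter> M) = V \<inter> span B)"

definition C2_map_on :: "'a::euclidean_space set \<Rightarrow> ('a \<Rightarrow> 'b::euclidean_space) \<Rightarrow> bool" where
  "C2_map_on M h \<longleftrightarrow> (\<forall>p\<in>M. \<exists>U H. open U \<and> p \<in> U \<and> C2_on U H \<and> (\<forall>x\<in>U \<inter> M. H x = h x))"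

definition C2_diffeo_on :: "'a::euclidean_space set \<Rightarrow> ('a \<Rightarrow> 'a) \<Rightarrow> bool" where
  "C2_diffeo_on M \<phi> \<longleftrightarrow> bij_betw \<phi> M M \<and> C2_map_on M \<phi> \<and> C2_map_on M (inv_into M \<phi>)"

definition periodic_points :: "'a set \<Rightarrow> ('a \<Rightarrow> 'a) \<Rightarrow> 'a set" where
  "periodic_points M \<phi> = {m \<in> M. \<exists>n>0. (\<phi> ^^ n) m = m}"

definition period :: "('a \<Rightarrow> 'a) \<Rightarrow> 'a \<Rightarrow> nat" where
  "period \<phi> m = (LEAST n. n > 0 \<and> (\<phi> ^^ n) m = m)"

primrec matpow :: "real^'n^'n \<Rightarrow> nat \<Rightarrow> real^'n^'n" where
  "matpow A 0 = mat 1"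
| "matpow A (Suc k) = A ** matpow A k"

definition spectral_radius :: "real^'n^'n \<Rightarrow> real" where
  "spectral_radius A = Max {cmod z | z. \<exists>v :: complex^'n. v \<noteq> 0 \<and>
       (map_matrix complex_of_real A) *v v = z *s v}"

end

theory Submission imports "Jordan_Normal_Form.Spectral_Radius" Defs begin

no_notation Matrix.vec_index (infixl "$" 100)

definition toM :: "(nat \<Rightarrow> 'n::finite) \<Rightarrow> ('a::comm_ring_1)^'n^'n \<Rightarrow> 'a mat" where
  "toM e X = Matrix.mat CARD('n) CARD('n) (\<lambda>(i,j). X $ e i $ e j)"

definition toV :: "(nat \<Rightarrow> 'n::finite) \<Rightarrow> ('a::comm_ring_1)^'n \<Rightarrow> 'a Matrix.vec" where
  "toV e w = Matrix.vec CARD('n) (\<lambda>i. w $ e i)"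

definition fromV :: "(nat \<Rightarrow> 'n::finite) \<Rightarrow> ('a::comm_ring_1) Matrix.vec \<Rightarrow> 'a^'n" where
  "fromV e v = (\<chi> s. Matrix.vec_index v (inv_into {0..<CARD('n)} e s))"

lemma toM_carrier[simp]: "toM e (X::'a::comm_ring_1^'n::finite^'n) \<in> carrier_mat CARD('n) CARD('n)"
  by (simp add: toM_def)

lemma toV_carrier[simp]: "toV e (w::'a::comm_ring_1^'n::finite) \<in> carrier_vec CARD('n)"
  by (simp add: toV_def)

lemma dims[simp]: "dim_row (toM e (X::'a::comm_ring_1^'n::finite^'n)) = CARD('n)"
   "dim_col (toM e X) = CARD('n)" "dim_vec (toV e (w::'a::comm_ring_1^'n)) = CARD('n)"
  by (auto simp: toM_def toV_def)

abbreviation "mapc X \<equiv> map_matrix complex_of_real X"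

definition SR :: "real^'n^'n \<Rightarrow> real set" where
  "SR A = {cmod z | z. \<exists>v :: complex^'n. v \<noteq> 0 \<and> (mapc A) *v v = z *s v}"

lemma SR_mem: "x \<in> SR A \<longleftrightarrow> (\<exists>z v. x = cmod z \<and> v \<noteq> 0 \<and> mapc A *v v = z *s v)"
  unfolding SR_def by blast

context
  fixes e :: "nat \<Rightarrow> 'n::finite"
  assumes e: "bij_betw e {0..<CARD('n)} UNIV"
begin

lemma sum_e: "(\<Sum>j\<in>{0..<CARD('n)}. g (e j)) = (\<Sum>s\<in>UNIV. g s)"
  using sum.reindex_bij_betw[OF e] .

lemma toM_mult_vec: "toM e X *\<^sub>v toV e w = toV e (X *v w)"
  apply (rule eq_vecI)
   apply (simp_all add: toM_def toV_def mult_mat_vec_def scalar_prod_def matrix_vector_mult_def)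
  apply (subst sum_e[symmetric]) apply (rule sum.cong) apply auto
  done

lemma toM_mult: "toM e (X ** Y) = toM e X * toM e Y"
  apply (rule eq_matI)
    apply (simp_all add: toM_def scalar_prod_def matrix_matrix_mult_def row_def col_def)
  apply (subst sum_e[symmetric]) apply (rule sum.cong) apply auto
  done

lemma e_inj: "i < CARD('n) \<Longrightarrow> j < CARD('n) \<Longrightarrow> e i = e j \<longleftrightarrow> i = j"
  using e unfolding bij_betw_def inj_on_def by auto

lemma toM_one: "toM e (Finite_Cartesian_Product.mat 1) = 1\<^sub>m CARD('n)"
  apply (rule eq_matI)
    apply (auto simp: toM_def Finite_Cartesian_Product.mat_def e_inj)
  done

lemma toV_fromV: "v \<in> carrier_vec CARD('n) \<Longrightarrow> toV e (fromV e v) = v"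
  apply (rule eq_vecI)
   apply (auto simp: toV_def fromV_def)
  using e by (simp add: bij_betw_inv_into_left)

lemma toV_inj: "toV e w = toV e w' \<Longrightarrow> w = w'"
proof -
  assume h: "toV e w = toV e w'"
  show "w = w'"
  proof (rule vec_eq_iff[THEN iffD2], rule allI)
    fix s
    obtain i where i: "i < CARD('n)" "e i = s" using e unfolding bij_betw_def by (metis UNIV_I atLeastLessThan_iff imageE)
    have "Matrix.vec_index (toV e w) i = Matrix.vec_index (toV e w') i" using h by simp
    thus "w $ s = w' $ s" using i by (simp add: toV_def)
  qed
qed

lemma toV_smult: "toV e (z *s w) = z \<cdot>\<^sub>v toV e w"
  by (rule eq_vecI) (auto simp: toV_def)

lemma toV_zero: "toV e 0 = 0\<^sub>v CARD('n)"
  by (rule eq_vecI) (auto simp: toV_def)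

lemma eigen_iff: "eigenvalue (toM e X) z \<longleftrightarrow> (\<exists>w. w \<noteq> 0 \<and> X *v w = z *s w)"
proof
  assume "eigenvalue (toM e X) z"
  then obtain v where v: "v \<in> carrier_vec CARD('n)" "v \<noteq> 0\<^sub>v CARD('n)" "toM e X *\<^sub>v v = z \<cdot>\<^sub>v v"
    unfolding eigenvalue_def eigenvector_def by auto
  define w where "w = fromV e v"
  have vw: "v = toV e w" using toV_fromV[OF v(1)] w_def by simp
  have "w \<noteq> 0" using v(2) vw toV_zero by auto
  moreover have "X *v w = z *s w"
    using v(3) unfolding vw toM_mult_vec toV_smult[symmetric] by (rule toV_inj)
  ultimately show "\<exists>w. w \<noteq> 0 \<and> X *v w = z *s w" by blast
next
  assume "\<exists>w. w \<noteq> 0 \<and> X *v w = z *s w"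
  then obtain w where w: "w \<noteq> 0" "X *v w = z *s w" by blast
  have "toV e w \<noteq> 0\<^sub>v CARD('n)" using w(1) toV_zero toV_inj by metis
  moreover have "toM e X *\<^sub>v toV e w = z \<cdot>\<^sub>v toV e w" using w(2) by (simp add: toM_mult_vec toV_smult)
  ultimately show "eigenvalue (toM e X) z" unfolding eigenvalue_def eigenvector_def by (auto intro!: exI[of _ "toV e w"])
qed

lemma spectrum_eq: "norm ` Spectral_Radius.spectrum (toM e (mapc A)) = SR A"
  unfolding SR_def Spectral_Radius.spectrum_def using eigen_iff[of "mapc A"] by auto

lemma SR_finite: "finite (SR (A::real^'n^'n))"
  using spectrum_eq[of A] card_finite_spectrum(1)[OF toM_carrier[of e "mapc A"]] by (metis finite_imageI)

lemma SR_eq: "Defs.spectral_radius (A::real^'n^'n) = Spectral_Radius.spectral_radius (toM e (mapc A))"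
  unfolding Defs.spectral_radius_def Spectral_Radius.spectral_radius_def spectrum_eq SR_def ..

end

lemma mapc_mult: "mapc (X ** Y) = mapc X ** mapc Y"
  by (simp add: vec_eq_iff matrix_matrix_mult_def)

lemma mapc_one: "mapc (Finite_Cartesian_Product.mat 1) = Finite_Cartesian_Product.mat 1"
  by (simp add: vec_eq_iff Finite_Cartesian_Product.mat_def)

lemma matpow_Suc': "matpow A (Suc k) = matpow A k ** A"
  by (induction k) (simp_all add: matrix_mul_assoc)

lemma matpow_add: "matpow A (k + l) = matpow A k ** matpow A l"
  by (induction k) (simp_all add: matrix_mul_assoc)

lemma toM_pow:
  assumes e: "bij_betw e {0..<CARD('n)} (UNIV::'n::finite set)"
  shows "toM e (mapc (matpow (A::real^'n^'n) k)) = toM e (mapc A) ^\<^sub>m k"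
proof (induction k)
  case 0
  have "mapc (matpow A 0) = Finite_Cartesian_Product.mat 1" by (simp add: mapc_one)
  thus ?case using toM_one[OF e] by simp
next
  case (Suc k)
  show ?case unfolding matpow_Suc' mapc_mult toM_mult[OF e] Suc by simp
qed


lemma matpow_scale: "matpow (c *\<^sub>R A) k = (c^k) *\<^sub>R matpow A k"
proof (induction k)
  case 0 show ?case by simp
next
  case (Suc k)
  show ?case unfolding matpow.simps Suc
    by (simp add: vec_eq_iff matrix_matrix_mult_def sum_distrib_left algebra_simps)
qed

lemma mapc_scale_mult: "mapc A *v v = complex_of_real r *s (mapc ((1/r) *\<^sub>R A) *v v)" if "r \<noteq> 0"
  using that by (simp add: vec_eq_iff matrix_vector_mult_def sum_distrib_left algebra_simps)

lemma decay:
  fixes A :: "real^'n::finite^'n"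
  assumes "Defs.spectral_radius A < 1"
  shows "\<exists>c r. 0 < r \<and> r < 1 \<and> (\<forall>k a b. \<bar>matpow A k $ a $ b\<bar> \<le> c * r^k)"
proof -
  obtain e :: "nat \<Rightarrow> 'n" where e: "bij_betw e {0..<CARD('n)} UNIV"
    using ex_bij_betw_nat_finite[of "UNIV::'n set"] by auto
  define \<rho> where "\<rho> = Defs.spectral_radius A"
  define r where "r = (max 0 \<rho> + 1) / 2"
  have r: "0 < r" "r < 1" "\<rho> < r" using assms unfolding r_def \<rho>_def by auto
  define A' where "A' = (1/r) *\<^sub>R A"
  have n: "CARD('n) > 0" by simp
  have "Spectral_Radius.spectral_radius (toM e (mapc A')) \<in> SR A'"
    using spectral_radius_mem_max(1)[OF toM_carrier n] spectrum_eq[OF e] by metis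
  hence "\<exists>z v. Spectral_Radius.spectral_radius (toM e (mapc A')) = cmod z \<and> v \<noteq> 0 \<and> mapc A' *v v = z *s v"
    by (simp only: SR_mem)
  then obtain z v where zv: "Spectral_Radius.spectral_radius (toM e (mapc A')) = cmod z"
    "v \<noteq> 0" "mapc A' *v v = z *s v" by blast
  have "mapc A *v v = (complex_of_real r * z) *s v"
    using mapc_scale_mult[of r A v] r zv(3) unfolding A'_def by (simp add: vector_smult_assoc)
  hence "cmod (complex_of_real r * z) \<in> SR A" unfolding SR_def using zv(2) by blast
  hence "cmod (complex_of_real r * z) \<le> \<rho>"
    unfolding \<rho>_def Defs.spectral_radius_def SR_def[symmetric] by (rule Max_ge[OF SR_finite[OF e]])
  hence "r * cmod z \<le> \<rho>" using r by (simp add: norm_mult)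
  hence "cmod z < 1" using r
    by (metis less_le_trans mult.right_neutral mult_less_cancel_left_pos not_le)
  hence "Spectral_Radius.spectral_radius (toM e (mapc A')) < 1" using zv(1) by simp
  from spectral_radius_jnf_norm_bound_less_1_upper_triangular[OF toM_carrier this]
  obtain c where c: "\<And>k. norm_bound (toM e (mapc A') ^\<^sub>m k) c" by blast
  have "\<bar>matpow A k $ a $ b\<bar> \<le> c * r^k" for k a b
  proof -
    obtain i where i: "i < CARD('n)" "e i = a" using e unfolding bij_betw_def
      by (metis UNIV_I atLeastLessThan_iff imageE)
    obtain j where j: "j < CARD('n)" "e j = b" using e unfolding bij_betw_def
      by (metis UNIV_I atLeastLessThan_iff imageE)
    have "norm (toM e (mapc (matpow A' k)) $$ (i,j)) \<le> c"
      using c[of k] unfolding toM_pow[OF e] norm_bound_def using i j by simp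
    hence "cmod (complex_of_real ((1/r)^k * matpow A k $ a $ b)) \<le> c"
      using i j unfolding A'_def matpow_scale by (simp add: toM_def)
    hence "\<bar>(1/r)^k * matpow A k $ a $ b\<bar> \<le> c" by (simp only: norm_of_real)
    hence "\<bar>matpow A k $ a $ b\<bar> / r^k \<le> c" using r by (simp add: abs_mult power_divide)
    thus ?thesis using r by (simp add: divide_le_eq mult.commute)
  qed
  thus ?thesis using r by blast
qed


lemma vec_decay:
  fixes A :: "real^'n::finite^'n"
  assumes "Defs.spectral_radius A < 1"
  shows "\<exists>K r. 0 < r \<and> r < 1 \<and> (\<forall>k v. norm (matpow A k *v v) \<le> K * r^k * (\<Sum>b\<in>UNIV. \<bar>v $ b\<bar>))"
proof -
  obtain c r where cr: "0 < r" "r < 1" "\<And>k a b. \<bar>matpow A k $ a $ b\<bar> \<le> c * r^k"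
    using decay[OF assms] by blast
  have "norm (matpow A k *v v) \<le> (real CARD('n) * c) * r^k * (\<Sum>b\<in>UNIV. \<bar>v $ b\<bar>)" for k v
  proof -
    have "norm (matpow A k *v v) \<le> (\<Sum>a\<in>UNIV. \<bar>(matpow A k *v v) $ a\<bar>)" by (rule norm_le_l1_cart)
    also have "\<dots> \<le> (\<Sum>a\<in>(UNIV::'n set). \<Sum>b\<in>UNIV. c * r^k * \<bar>v $ b\<bar>)"
    proof (rule sum_mono)
      fix a
      have "\<bar>(matpow A k *v v) $ a\<bar> = \<bar>\<Sum>b\<in>UNIV. matpow A k $ a $ b * v $ b\<bar>"
        by (simp add: matrix_vector_mult_def)
      also have "\<dots> \<le> (\<Sum>b\<in>UNIV. \<bar>matpow A k $ a $ b * v $ b\<bar>)" by (rule sum_abs)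
      also have "\<dots> \<le> (\<Sum>b\<in>UNIV. c * r^k * \<bar>v $ b\<bar>)"
        by (rule sum_mono) (simp add: abs_mult cr(3) mult_right_mono)
      finally show "\<bar>(matpow A k *v v) $ a\<bar> \<le> (\<Sum>b\<in>UNIV. c * r^k * \<bar>v $ b\<bar>)" .
    qed
    also have "\<dots> = (real CARD('n) * c) * r^k * (\<Sum>b\<in>UNIV. \<bar>v $ b\<bar>)"
      by (simp add: sum_distrib_left mult.assoc)
    finally show ?thesis .
  qed
  thus ?thesis using cr by blast
qed

theorem mainTheorem7:
  fixes M :: "'a::euclidean_space set" and \<phi> :: "'a \<Rightarrow> 'a"
    and A :: "real^'n^'n" and C :: "real^'n" and \<omega> :: "'a \<Rightarrow> real"
    and f g :: "'a \<Rightarrow> real^'n" and l :: nat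
  assumes "compact M" and "C2_submanifold M"
    and "C2_diffeo_on M \<phi>"
    and "finite (periodic_points M \<phi>)"
    and "l = Lcm (period \<phi> ` periodic_points M \<phi>)"
    and "spectral_radius A < 1"
    and "C2_map_on M \<omega>"
    and "\<And>m. m \<in> M \<Longrightarrow> f m = (\<Sum>k. \<omega> ((inv_into M \<phi> ^^ k) m) *\<^sub>R (matpow A k *v C))"
    and "\<And>m. m \<in> periodic_points M \<phi> \<Longrightarrow>
           g m = (\<Sum>k<l. \<omega> ((inv_into M \<phi> ^^ k) m) *\<^sub>R (matpow A k *v C))"
  shows "inj_on f (periodic_points M \<phi>) \<longleftrightarrow> inj_on g (periodic_points M \<phi>)"
proof (cases "periodic_points M \<phi> = {}")
  case True thus ?thesis by simp
next
  case False
  define P where "P = periodic_points M \<phi>"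
  define \<psi> where "\<psi> = inv_into M \<phi>"
  have bij: "bij_betw \<phi> M M" using assms(3) unfolding C2_diffeo_on_def by blast
  have \<psi>M: "x \<in> M \<Longrightarrow> \<psi> x \<in> M" for x
    unfolding \<psi>_def using bij by (metis bij_betw_def inv_into_into)
  have \<phi>M: "x \<in> M \<Longrightarrow> \<phi> x \<in> M" for x using bij by (meson bij_betwE)
  have \<psi>\<phi>: "x \<in> M \<Longrightarrow> \<psi> (\<phi> x) = x" for x
    unfolding \<psi>_def using bij by (meson bij_betw_inv_into_left)
  have \<phi>Mk: "x \<in> M \<Longrightarrow> (\<phi> ^^ k) x \<in> M" for x k
    by (induction k) (auto intro: \<phi>M)
  have bk: "x \<in> M \<Longrightarrow> (\<psi> ^^ k) ((\<phi> ^^ k) x) = x" for x k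
  proof (induction k)
    case 0 thus ?case by simp
  next
    case (Suc k)
    have e1: "(\<psi> ^^ Suc k) y = (\<psi> ^^ k) (\<psi> y)" for y
      by (simp add: funpow_Suc_right del: funpow.simps)
    have "(\<psi> ^^ Suc k) ((\<phi> ^^ Suc k) x) = (\<psi> ^^ k) (\<psi> (\<phi> ((\<phi> ^^ k) x)))"
      unfolding e1 by simp
    also have "\<dots> = x" using Suc \<psi>\<phi> \<phi>Mk by simp
    finally show ?case .
  qed
  have PM: "P \<subseteq> M" unfolding P_def periodic_points_def by auto
  have fin: "finite P" using assms(4) P_def by simp
  have per: "period \<phi> m > 0 \<and> (\<phi> ^^ period \<phi> m) m = m" if "m \<in> P" for m
  proof -
    from that obtain n where "n > 0" "(\<phi> ^^ n) m = m" unfolding P_def periodic_points_def by auto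
    thus ?thesis unfolding period_def using LeastI[of "\<lambda>n. 0 < n \<and> (\<phi> ^^ n) m = m" n] by blast
  qed
  have lpos: "l > 0"
  proof -
    have "Lcm (period \<phi> ` P) \<noteq> 0" using fin per by (subst Lcm_0_iff_nat) (auto, metis less_irrefl)
    thus ?thesis using assms(5) P_def by simp
  qed
  have \<psi>l: "(\<psi> ^^ l) m = m" if "m \<in> P" for m
  proof -
    have p: "(\<psi> ^^ period \<phi> m) m = m" using per[OF that] bk[of m "period \<phi> m"] that PM by auto
    have "period \<phi> m dvd l" using that assms(5) P_def by simp
    hence "l mod period \<phi> m = 0" by simp
    thus ?thesis using funpow_mod_eq[OF p, of l] by simp
  qed
  have \<psi>mod: "(\<psi> ^^ k) m = (\<psi> ^^ (k mod l)) m" if "m \<in> P" for m k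
    using funpow_mod_eq[OF \<psi>l[OF that]] by simp
  have \<psi>shift: "(\<psi> ^^ (k + l)) m = (\<psi> ^^ k) m" if "m \<in> P" for m k
    using \<psi>mod[OF that, of "k+l"] \<psi>mod[OF that, of k] by simp
  obtain K r where Kr: "0 < r" "r < 1" "\<And>k v. norm (matpow A k *v v) \<le> K * r^k * (\<Sum>b\<in>UNIV. \<bar>v $ b\<bar>)"
    using vec_decay[OF assms(6)] by blast
  define a where "a m k = \<omega> ((\<psi> ^^ k) m) *\<^sub>R (matpow A k *v C)" for m k
  define B where "B = matpow A l"
  have summ: "summable (a m)" if "m \<in> P" for m
  proof -
    define W where "W = (\<Sum>j<l. \<bar>\<omega> ((\<psi> ^^ j) m)\<bar>)"
    have W: "\<bar>\<omega> ((\<psi> ^^ k) m)\<bar> \<le> W" for k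
    proof -
      have "\<bar>\<omega> ((\<psi> ^^ k) m)\<bar> = \<bar>\<omega> ((\<psi> ^^ (k mod l)) m)\<bar>" using \<psi>mod[OF that] by simp
      also have "\<dots> \<le> W" unfolding W_def
        by (rule member_le_sum) (use lpos in auto)
      finally show ?thesis .
    qed
    have nb: "norm (a m k) \<le> (W * K * (\<Sum>b\<in>UNIV. \<bar>C $ b\<bar>)) * r^k" for k
    proof -
      have "norm (a m k) = \<bar>\<omega> ((\<psi> ^^ k) m)\<bar> * norm (matpow A k *v C)" unfolding a_def by simp
      also have "\<dots> \<le> W * (K * r^k * (\<Sum>b\<in>UNIV. \<bar>C $ b\<bar>))"
        by (rule mult_mono) (use W Kr(3) W[of 0] in \<open>auto intro: order_trans[OF abs_ge_zero]\<close>)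
      finally show ?thesis by (simp add: algebra_simps)
    qed
    have sg: "summable (\<lambda>k. (W * K * (\<Sum>b\<in>UNIV. \<bar>C $ b\<bar>)) * r^k)"
      using Kr by (intro summable_mult summable_geometric) auto
    show ?thesis by (rule summable_comparison_test'[OF sg nb])
  qed
  have fg: "f m = g m + B *v f m" if "m \<in> P" for m
  proof -
    have fm: "f m = suminf (a m)" using assms(8)[of m] that PM unfolding a_def \<psi>_def by auto
    have gm: "g m = sum (a m) {..<l}" using assms(9)[of m] that unfolding a_def \<psi>_def P_def by auto
    have sh: "a m (k + l) = B *v a m k" for k
      unfolding a_def B_def using \<psi>shift[OF that, of k]
      by (simp add: matrix_vector_mult_scaleR matrix_vector_mul_assoc matpow_add[of A l k, symmetric] add.commute)
    have "suminf (a m) = (\<Sum>k. a m (k + l)) + sum (a m) {..<l}"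
      by (rule suminf_split_initial_segment[OF summ[OF that]])
    also have "(\<Sum>k. a m (k + l)) = B *v suminf (a m)"
      unfolding sh by (rule bounded_linear.suminf[OF matrix_vector_mul_bounded_linear summ[OF that], symmetric])
    finally have "suminf (a m) = B *v suminf (a m) + sum (a m) {..<l}" .
    thus ?thesis unfolding fm gm by (metis add.commute)
  qed
  have fix0: "v = 0" if "B *v v = v" for v
  proof -
    have pw: "matpow A (l * j) *v v = v" for j
    proof (induction j)
      case 0 thus ?case by simp
    next
      case (Suc j)
      have "matpow A (l * Suc j) = B ** matpow A (l * j)"
        unfolding B_def by (simp add: matpow_add[symmetric])
      thus ?case using Suc that by (simp add: matrix_vector_mul_assoc[symmetric])
    qed
    define S where "S = (\<Sum>b\<in>UNIV. \<bar>v $ b\<bar>)"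
    have le: "norm v \<le> K * S * (r^l)^j" for j
    proof -
      have "norm v \<le> K * r^(l*j) * S" using Kr(3)[of "l*j" v] pw[of j] unfolding S_def by simp
      moreover have "r^(l*j) = (r^l)^j" by (simp add: power_mult)
      ultimately show ?thesis by (simp add: mult_ac)
    qed
    have "(\<lambda>j. K * S * (r^l)^j) \<longlonglongrightarrow> K * S * 0"
      using Kr lpos by (intro tendsto_mult_left LIMSEQ_power_zero) (auto simp: power_less_one_iff)
    hence "norm v \<le> 0" using le by (intro LIMSEQ_le_const) auto
    thus ?thesis by simp
  qed
  show ?thesis unfolding P_def[symmetric]
  proof
    assume inj: "inj_on f P"
    show "inj_on g P"
    proof (rule inj_onI)
      fix x y assume xy: "x \<in> P" "y \<in> P" "g x = g y"
      have h1: "B *v f x = f x - g x" using fg[OF xy(1)] by (metis add_diff_cancel_left')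
      have h2: "B *v f y = f y - g y" using fg[OF xy(2)] by (metis add_diff_cancel_left')
      have "B *v (f x - f y) = f x - f y"
        unfolding matrix_vector_mult_diff_distrib h1 h2 xy(3) by simp
      hence "f x = f y" using fix0 by (metis eq_iff_diff_eq_0)
      thus "x = y" using inj xy by (meson inj_onD)
    qed
  next
    assume inj: "inj_on g P"
    show "inj_on f P"
    proof (rule inj_onI)
      fix x y assume xy: "x \<in> P" "y \<in> P" "f x = f y"
      have "g x = g y" using fg[OF xy(1)] fg[OF xy(2)] xy(3) by (metis add_diff_cancel_right')
      thus "x = y" using inj xy by (meson inj_onD)
    qed
  qed
qed

end
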